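(* For every $h\in(\tfrac12,\tfrac34)$ and every integer $k\ge1$, $$\rho_h(k)\ge\frac{h(2h-1)}{2k^{2-2h}}.$$ In particular $\sum_{k=1}^\infty\rho_h^2(k)\ge\frac{h^2(2h-1)^2}{4}\zeta(4-4h)$, where $\zeta$ is the Riemann zeta function, and consequently $\lim_{h\to\frac34-}\sum_{k=1}^\infty\rho_h^2(k)=\infty$.
   Context: $\rho_h(k)=\frac12\big((k+1)^{2h}+(k-1)^{2h}-2k^{2h}\big)$. *)

theory Defs
  imports "HOL-Analysis.Analysis"
begin

definition rho :: "real \<Rightarrow> nat \<Rightarrow> real" where
  "rho h k = ((real k + 1) powr (2*h) + (real k - 1) powr (2*h) - 2 * real k powr (2*h)) / 2"

definition zeta_real :: "real \<Rightarrow> real" where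
  "zeta_real s = (\<Sum>n. 1 / real (Suc n) powr s)"

end

theory Submission imports Defs begin

lemma bern_ge:
  fixes z p :: real
  assumes p: "p \<ge> 1" and z: "z \<ge> 0"
  shows "1 + p * (z - 1) \<le> z powr p"
proof (cases "z = 0")
  case True then show ?thesis using p by simp
next
  case False
  then have zp: "z > 0" using z by simp
  have der: "\<And>x. x > 0 \<Longrightarrow> ((\<lambda>x. x powr p - p * x) has_real_derivative (p * x powr (p - 1) - p)) (at x)"
    by (auto intro!: derivative_eq_intros)
  show ?thesis
  proof (cases "z \<ge> 1")
    case True
    have "1 powr p - p * 1 \<le> z powr p - p * z"
    proof (rule DERIV_nonneg_imp_nondecreasing[OF True])
      fix x assume x: "1 \<le> x" "x \<le> z"
      have "x powr (p - 1) \<ge> 1" using x p by (simp add: ge_one_powr_ge_zero)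
      then have "p * x powr (p - 1) - p \<ge> 0" using p
        by (metis diff_ge_0_iff_ge mult.right_neutral mult_left_mono order_trans zero_le_one)
      then show "\<exists>y. ((\<lambda>x. x powr p - p * x) has_real_derivative y) (at x) \<and> 0 \<le> y"
        using der[of x] x by auto
    qed
    then show ?thesis by (simp add: algebra_simps)
  next
    case False
    have "z powr p - p * z \<ge> 1 powr p - p * 1"
    proof (rule DERIV_nonpos_imp_nonincreasing[of z 1 "\<lambda>x. x powr p - p * x"])
      show "z \<le> 1" using False by simp
      fix x assume x: "z \<le> x" "x \<le> 1"
      have "x powr (p - 1) \<le> 1 powr (p - 1)" using x p zp by (intro powr_mono2) auto
      then have "x powr (p - 1) \<le> 1" by simp
      then have "p * x powr (p - 1) - p \<le> 0" using p
        by (metis diff_le_0_iff_le mult.right_neutral mult_left_mono order_trans zero_le_one)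
      then show "\<exists>y. ((\<lambda>x. x powr p - p * x) has_real_derivative y) (at x) \<and> y \<le> 0"
        using der[of x] x zp by auto
    qed
    then show ?thesis by (simp add: algebra_simps)
  qed
qed

lemma bern_le:
  fixes z p :: real
  assumes p: "0 < p" "p \<le> 1" and z: "z \<ge> 0"
  shows "z powr p \<le> 1 + p * (z - 1)"
proof (cases "z = 0")
  case True then show ?thesis using p by simp
next
  case False
  then have zp: "z > 0" using z by simp
  have der: "\<And>x. x > 0 \<Longrightarrow> ((\<lambda>x. x powr p - p * x) has_real_derivative (p * x powr (p - 1) - p)) (at x)"
    by (auto intro!: derivative_eq_intros)
  show ?thesis
  proof (cases "z \<ge> 1")
    case True
    have "1 powr p - p * 1 \<ge> z powr p - p * z"
    proof (rule DERIV_nonpos_imp_nonincreasing[OF True])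
      fix x assume x: "1 \<le> x" "x \<le> z"
      have "x powr (p - 1) \<le> x powr 0" using x p by (intro powr_mono) auto
      then have "x powr (p - 1) \<le> 1" using x by simp
      then have "p * x powr (p - 1) - p \<le> 0" using p
        by (metis diff_le_0_iff_le mult.right_neutral mult_left_mono less_imp_le)
      then show "\<exists>y. ((\<lambda>x. x powr p - p * x) has_real_derivative y) (at x) \<and> y \<le> 0"
        using der[of x] x by auto
    qed
    then show ?thesis by (simp add: algebra_simps)
  next
    case False
    have "z powr p - p * z \<le> 1 powr p - p * 1"
    proof (rule DERIV_nonneg_imp_nondecreasing[of z 1 "\<lambda>x. x powr p - p * x"])
      show "z \<le> 1" using False by simp
      fix x assume x: "z \<le> x" "x \<le> 1"
      have "1 powr (p - 1) \<le> x powr (p - 1)" using x p zp by (intro powr_mono2') auto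
      then have "x powr (p - 1) \<ge> 1" by simp
      then have "p * x powr (p - 1) - p \<ge> 0" using p
        by (metis diff_ge_0_iff_ge mult.right_neutral mult_left_mono less_imp_le)
      then show "\<exists>y. ((\<lambda>x. x powr p - p * x) has_real_derivative y) (at x) \<and> 0 \<le> y"
        using der[of x] x zp by auto
    qed
    then show ?thesis by (simp add: algebra_simps)
  qed
qed

lemma tan_ge:
  fixes x y p :: real
  assumes p: "p \<ge> 1" and x: "x > 0" and y: "y \<ge> 0"
  shows "x powr p + p * x powr (p - 1) * (y - x) \<le> y powr p"
proof -
  have "1 + p * (y / x - 1) \<le> (y / x) powr p" using bern_ge[OF p, of "y/x"] x y by simp
  then have "x powr p * (1 + p * (y / x - 1)) \<le> x powr p * (y / x) powr p"
    by (intro mult_left_mono) auto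
  also have "x powr p * (y / x) powr p = y powr p" using x y by (simp add: powr_divide)
  also have "x powr p * (1 + p * (y / x - 1)) = x powr p + p * x powr (p - 1) * (y - x)"
    using x by (simp add: powr_diff field_simps)
  finally show ?thesis .
qed

lemma tan_le:
  fixes x y p :: real
  assumes p: "0 < p" "p \<le> 1" and x: "x > 0" and y: "y \<ge> 0"
  shows "y powr p \<le> x powr p + p * x powr (p - 1) * (y - x)"
proof -
  have "(y / x) powr p \<le> 1 + p * (y / x - 1)" using bern_le[OF p, of "y/x"] x y by simp
  then have "x powr p * (y / x) powr p \<le> x powr p * (1 + p * (y / x - 1))"
    by (intro mult_left_mono) auto
  also have "x powr p * (y / x) powr p = y powr p" using x y by (simp add: powr_divide)
  also have "x powr p * (1 + p * (y / x - 1)) = x powr p + p * x powr (p - 1) * (y - x)"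
    using x by (simp add: powr_diff field_simps)
  finally show ?thesis .
qed

lemma lower_K:
  fixes a K :: real
  assumes a: "1 < a" "a \<le> 2" and K: "K \<ge> 2"
  shows "2 * K powr a + a * (a - 1) / 2 * K powr (a - 2) \<le> (K + 1) powr a + (K - 1) powr a"
proof -
  define \<phi> where "\<phi> = (\<lambda>x. (K + x) powr a + (K - x) powr a - a * (a - 1) / 2 * K powr (a - 2) * x^2)"
  have "\<phi> 0 \<le> \<phi> 1"
  proof (rule DERIV_nonneg_imp_nondecreasing[of 0 1 \<phi>])
    fix x :: real assume x: "0 \<le> x" "x \<le> 1"
    have d: "(\<phi> has_real_derivative
       a * (K + x) powr (a - 1) - a * (K - x) powr (a - 1) - a * (a - 1) * K powr (a - 2) * x) (at x)"
      unfolding \<phi>_def using x K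
      by (auto intro!: derivative_eq_intros simp: power2_eq_square algebra_simps add_divide_distrib diff_divide_distrib)
    have "K powr (a - 1) \<le> (K + x) powr (a - 1)" using x K a by (intro powr_mono2) auto
    moreover have "(K - x) powr (a - 1) \<le> K powr (a - 1) + (a - 1) * K powr (a - 1 - 1) * ((K - x) - K)"
      using x K a by (intro tan_le) auto
    ultimately have "(a - 1) * K powr (a - 2) * x \<le> (K + x) powr (a - 1) - (K - x) powr (a - 1)"
      by (simp add: algebra_simps)
    then have "a * ((a - 1) * K powr (a - 2) * x) \<le> a * ((K + x) powr (a - 1) - (K - x) powr (a - 1))"
      using a by (intro mult_left_mono) auto
    then show "\<exists>y. (\<phi> has_real_derivative y) (at x) \<and> 0 \<le> y"
      using d by (intro exI[of _ "a * (K + x) powr (a - 1) - a * (K - x) powr (a - 1) - a * (a - 1) * K powr (a - 2) * x"])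
         (auto simp: algebra_simps)
  qed simp
  then show ?thesis unfolding \<phi>_def by simp
qed

lemma aux_half: "(A::real) = T / 2 \<Longrightarrow> X + T \<le> Y \<Longrightarrow> A \<le> (Y - X) / 2"
  by (simp add: field_simps)

lemma part1:
  fixes h :: real and k :: nat
  assumes h: "1/2 < h" "h < 3/4" and k: "k \<ge> 1"
  shows "rho h k \<ge> h * (2*h - 1) / (2 * real k powr (2 - 2*h))"
proof (cases "k = 1")
  case True
  have "1 + 2*h * (2 - 1) \<le> 2 powr (2*h)" using bern_ge[of "2*h" 2] h by simp
  moreover have "(2*h - 1) * (1 - h) \<ge> 0" using h by (intro mult_nonneg_nonneg) auto
  ultimately have "2 + (h * (h * 4) - h * 2) / 2 \<le> 2 powr (h * 2)"
    proof -
    assume A: "1 + 2*h * (2 - 1) \<le> 2 powr (2*h)" "(2*h - 1) * (1 - h) \<ge> 0"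
    have "2 + (h * (h * 4) - h * 2) / 2 = 1 + 2*h - (2 * h - 1) * (1 - h)" by (simp add: field_simps)
    then show ?thesis using A by (simp add: mult.commute)
  qed
  then show ?thesis using True h by (simp add: rho_def algebra_simps)
next
  case False
  then have K: "real k \<ge> 2" using k by simp
  have "2 * real k powr (2*h) + (2*h) * (2*h - 1) / 2 * real k powr (2*h - 2)
        \<le> (real k + 1) powr (2*h) + (real k - 1) powr (2*h)"
    using lower_K[of "2*h" "real k"] h K by simp
  moreover have "real k powr (2*h - 2) = 1 / real k powr (2 - 2*h)"
    using powr_minus_divide[of "real k" "2 - 2*h"] by simp
  ultimately have F: "2 * real k powr (2*h) + (2*h) * (2*h - 1) / 2 * (1 / real k powr (2 - 2*h))
        \<le> (real k + 1) powr (2*h) + (real k - 1) powr (2*h)" by simp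
  have "h * (2*h - 1) / (2 * real k powr (2 - 2*h)) = ((2*h) * (2*h - 1) / 2 * (1 / real k powr (2 - 2*h))) / 2"
    using K by (simp add: field_simps)
  then show ?thesis unfolding rho_def by (rule aux_half[OF _ F])
qed

lemma upper_K:
  fixes a K :: real
  assumes a: "1 < a" "a \<le> 2" and K: "K \<ge> 2"
  shows "(K + 1) powr a + (K - 1) powr a - 2 * K powr a \<le> 2 * a * (a - 1) * (K - 1) powr (a - 2)"
proof -
  have e1: "(K + 1) powr a + a * (K + 1) powr (a - 1) * (K - (K + 1)) \<le> K powr a"
    using a K by (intro tan_ge) auto
  have e2: "(K - 1) powr a + a * (K - 1) powr (a - 1) * (K - (K - 1)) \<le> K powr a"
    using a K by (intro tan_ge) auto
  have e3: "(K + 1) powr (a - 1) \<le> (K - 1) powr (a - 1) + (a - 1) * (K - 1) powr (a - 1 - 1) * ((K + 1) - (K - 1))"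
    using a K by (intro tan_le) auto
  have e3': "a * (K + 1) powr (a - 1) \<le> a * (K - 1) powr (a - 1) + 2 * a * (a - 1) * (K - 1) powr (a - 2)"
    using mult_left_mono[OF e3, of a] a by (simp add: algebra_simps)
  show ?thesis using e1 e2 e3' by (simp add: algebra_simps)
qed

lemma rho_upper:
  fixes h :: real and k :: nat
  assumes h: "1/2 < h" "h < 3/4" and k: "k \<ge> 2"
  shows "rho h k \<le> 2 * h * (2 * h - 1) * (real k - 1) powr (2 * h - 2)"
  using upper_K[of "2*h" "real k"] h k unfolding rho_def by (simp add: field_simps)

lemma rho_nonneg:
  fixes h :: real and k :: nat
  assumes h: "1/2 < h" "h < 3/4" and k: "k \<ge> 1"
  shows "rho h k \<ge> 0"
proof -
  have "0 \<le> h * (2*h - 1) / (2 * real k powr (2 - 2*h))" using h k by simp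
  then show ?thesis using part1[OF h k] by simp
qed

lemma summable_rho2:
  fixes h :: real
  assumes h: "1/2 < h" "h < 3/4"
  shows "summable (\<lambda>k. (rho h (Suc k))^2)"
proof -
  define C where "C = (2 * h * (2 * h - 1))^2"
  have "summable (\<lambda>k. real k powr (4 * h - 4))" using h by (simp add: summable_real_powr_iff)
  then have s: "summable (\<lambda>k. C * real k powr (4 * h - 4))" by (rule summable_mult)
  show ?thesis
  proof (rule summable_comparison_test'[OF s, of 1])
    fix n :: nat assume n: "n \<ge> 1"
    have r0: "rho h (Suc n) \<ge> 0" using rho_nonneg[OF h, of "Suc n"] by simp
    have r1: "rho h (Suc n) \<le> 2 * h * (2 * h - 1) * real n powr (2 * h - 2)"
      using rho_upper[OF h, of "Suc n"] n by simp
    have "(rho h (Suc n))^2 \<le> (2 * h * (2 * h - 1) * real n powr (2 * h - 2))^2"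
      using r0 r1 by (intro power_mono) auto
    also have "\<dots> = C * (real n powr (2 * h - 2))^2" unfolding C_def by (simp add: power_mult_distrib)
    also have "(real n powr (2 * h - 2))^2 = real n powr (4 * h - 4)"
      unfolding power2_eq_square powr_add[symmetric] by (rule arg_cong[where f="\<lambda>e. real n powr e"]) simp
    finally show "norm ((rho h (Suc n))^2) \<le> C * real n powr (4 * h - 4)" by simp
  qed
qed

lemma zeta_summable:
  fixes s :: real
  assumes s: "s > 1"
  shows "summable (\<lambda>n. 1 / real (Suc n) powr s)"
proof -
  have "summable (\<lambda>n. real n powr (-s))" using s by (simp add: summable_real_powr_iff)
  then have "summable (\<lambda>n. real (Suc n) powr (-s))" by (subst summable_Suc_iff)
  then show ?thesis by (simp add: powr_minus_divide)
qed

lemma part2: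
  fixes h :: real
  assumes h: "1/2 < h" "h < 3/4"
  shows "(\<Sum>k. (rho h (Suc k))^2) \<ge> h^2 * (2*h - 1)^2 / 4 * zeta_real (4 - 4*h)"
proof -
  define c where "c = h^2 * (2*h - 1)^2 / 4"
  have zs: "summable (\<lambda>n. 1 / real (Suc n) powr (4 - 4*h))" using h by (intro zeta_summable) auto
  have "c * zeta_real (4 - 4*h) = (\<Sum>n. c * (1 / real (Suc n) powr (4 - 4*h)))"
    unfolding zeta_real_def using suminf_mult[OF zs, of c] by simp
  also have "\<dots> \<le> (\<Sum>k. (rho h (Suc k))^2)"
  proof (rule suminf_le)
    show "summable (\<lambda>n. c * (1 / real (Suc n) powr (4 - 4*h)))" using zs by (rule summable_mult)
    show "summable (\<lambda>k. (rho h (Suc k))^2)" using summable_rho2[OF h] .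
    fix n :: nat
    define P where "P = real (Suc n) powr (2 - 2*h)"
    have P: "P > 0" unfolding P_def by simp
    have B: "h * (2*h - 1) / (2 * P) \<le> rho h (Suc n)" using part1[OF h, of "Suc n"] unfolding P_def by simp
    have B0: "0 \<le> h * (2*h - 1) / (2 * P)" using h P by simp
    have "(h * (2*h - 1) / (2 * P))^2 \<le> (rho h (Suc n))^2" using B B0 by (intro power_mono) auto
    moreover have "P^2 = real (Suc n) powr (4 - 4*h)"
      unfolding P_def power2_eq_square powr_add[symmetric]
      by (rule arg_cong[where f="\<lambda>e. real (Suc n) powr e"]) simp
    moreover have "(h * (2*h - 1) / (2 * P))^2 = c * (1 / P^2)"
      unfolding c_def by (simp add: power_divide power_mult_distrib)
    ultimately show "c * (1 / real (Suc n) powr (4 - 4*h)) \<le> (rho h (Suc n))^2" by simp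
  qed
  finally show ?thesis unfolding c_def .
qed

lemma part3:
  "filterlim (\<lambda>h. \<Sum>k. (rho h (Suc k))^2) at_top (at_left (3/4))"
  unfolding filterlim_at_top
proof
  fix Z :: real
  define c where "c = (\<lambda>h::real. h^2 * (2*h - 1)^2 / 4)"
  have "eventually (\<lambda>n. 29 * \<bar>Z\<bar> + 1 \<le> harm n) sequentially"
    using harm_at_top unfolding filterlim_at_top by blast
  then obtain N where N: "29 * \<bar>Z\<bar> + 1 \<le> harm N" by (auto simp: eventually_sequentially)
  define g where "g = (\<lambda>h. c h * (\<Sum>n<N. 1 / real (Suc n) powr (4 - 4*h)))"
  have "isCont g (3/4)" unfolding g_def c_def by (intro continuous_intros) auto
  then have "(g \<longlongrightarrow> g (3/4)) (at (3/4))" by (simp add: isCont_def)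
  then have lim: "(g \<longlongrightarrow> g (3/4)) (at_left (3/4))" by (rule tendsto_within_subset) simp
  have g34: "g (3/4) = 9/256 * harm N"
    proof -
    have e: "\<And>n::nat. 1 / real (Suc n) powr (4 - 4*(3/4)) = inverse (of_nat (Suc n))"
    proof -
      fix n :: nat
      have x: "(4 - 4*(3/4::real)) = 1" by simp
      have y: "real (Suc n) powr 1 = real (Suc n)" by (rule powr_one) simp
      show "1 / real (Suc n) powr (4 - 4*(3/4)) = inverse (of_nat (Suc n))"
        by (simp only: x y inverse_eq_divide)
    qed
    have "c (3/4) = 9/256" unfolding c_def by (simp add: power2_eq_square)
    then show ?thesis unfolding g_def harm_altdef e by simp
  qed
  have "256 * Z < 9 * harm N" using N by linarith
  then have "Z < g (3/4)" unfolding g34 by simp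
  then have ev1: "eventually (\<lambda>h. Z < g h) (at_left (3/4))" by (rule order_tendstoD(1)[OF lim])
  have ev2: "eventually (\<lambda>h. h \<in> {1/2<..<3/4}) (at_left (3/4::real))"
    by (rule eventually_at_left_real) simp
  show "eventually (\<lambda>h. Z \<le> (\<Sum>k. (rho h (Suc k))^2)) (at_left (3/4))"
    using ev1 ev2
  proof eventually_elim
    case (elim h)
    then have h: "1/2 < h" "h < 3/4" by auto
    have zs: "summable (\<lambda>n. 1 / real (Suc n) powr (4 - 4*h))" using h by (intro zeta_summable) auto
    have "(\<Sum>n<N. 1 / real (Suc n) powr (4 - 4*h)) \<le> zeta_real (4 - 4*h)"
      unfolding zeta_real_def by (rule sum_le_suminf[OF zs]) auto
    then have "g h \<le> c h * zeta_real (4 - 4*h)"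
      unfolding g_def by (rule mult_left_mono) (simp add: c_def)
    also have "\<dots> \<le> (\<Sum>k. (rho h (Suc k))^2)" using part2[OF h] by (simp add: c_def)
    finally show ?case using elim by simp
  qed
qed

theorem lemmaA4:
  shows "(\<forall>h k. 1/2 < h \<and> h < 3/4 \<and> k \<ge> 1 \<longrightarrow>
            rho h k \<ge> h * (2*h - 1) / (2 * real k powr (2 - 2*h)))
       \<and> (\<forall>h. 1/2 < h \<and> h < 3/4 \<longrightarrow>
            (\<Sum>k. (rho h (Suc k))^2) \<ge> h^2 * (2*h - 1)^2 / 4 * zeta_real (4 - 4*h))
       \<and> filterlim (\<lambda>h. \<Sum>k. (rho h (Suc k))^2) at_top (at_left (3/4))"
  using part1 part2 part3 by blast

end
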